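(* Let $\mathbf A\in\mathbb H^{m\times n}$ and $t\in\mathbb R$. Then for all $i=1,\dots,n$ and $j=1,\dots,m$, \[ \operatorname{cdet}_i\big((t\mathbf I+\mathbf A^{*}\mathbf A)_{.i}(\mathbf a^{*}_{.j})\big)=c_1^{(ij)}t^{n-1}+c_2^{(ij)}t^{n-2}+\dots+c_n^{(ij)}, \] where $c_n^{(ij)}=\operatorname{cdet}_i\big((\mathbf A^{*}\mathbf A)_{.i}(\mathbf a^{*}_{.j})\big)$ and $c_k^{(ij)}=\sum_{\beta\in J_{k,n}\{i\}}\operatorname{cdet}_i\Big(\big((\mathbf A^{*}\mathbf A)_{.i}(\mathbf a^{*}_{.j})\big)^{\beta}_{\beta}\Big)$ for $k=1,\dots,n-1$.
   Context: $\mathbb H$ is the quaternion skew field, $\mathbf A^*$ the conjugate transpose, $\mathbf a^*_{.j}$ the $j$th column of $\mathbf A^*$; $\mathbf M_{.i}(\mathbf b)$ is $\mathbf M$ with its $i$th column replaced by $\mathbf b$. Column determinant of $\mathbf M=(m_{ij})\in\mathbb H^{n\times n}$: $\operatorname{cdet}_j\mathbf M=\sum_{\tau\in S_n}(-1)^{n-r}m_{j_{k_r}j_{k_r+l_r}}\cdots m_{j_{k_r+1}j_{k_r}}\cdots m_{j\,j_{k_1+l_1}}\cdots m_{j_{k_1+1}j_{k_1}}m_{j_{k_1}j}$, where $\tau=(j_{k_r+l_r}\dots j_{k_r+1}j_{k_r})\cdots(j_{k_2+l_2}\dots j_{k_2})(j_{k_1+l_1}\dots j_{k_1+1}j_{k_1}\,j)$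 is the decomposition of $\tau$ into $r$ disjoint cycles (fixed points included), the rightmost cycle ending with $j$, each other cycle ending on the right with its smallest element, and $j_{k_2}<\dots<j_{k_r}$. $L_{k,n}$ is the set of strictly increasing $k$-sequences from $\{1,\dots,n\}$ and $J_{k,n}\{i\}=\{\beta\in L_{k,n}: i\in\beta\}$. $\mathbf N^{\beta}_{\beta}$ is the principal submatrix of $\mathbf N$ with rows and columns indexed by $\beta$; in $\operatorname{cdet}_i(\mathbf N^\beta_\beta)$ the subscript $i$ refers to the column of the submatrix coming from column $i$ of $\mathbf N$. *)

theory Defs
  imports Complex_Main "HOL-Combinatorics.Permutations"
begin

datatype quat = Quat (qRe: real) (qI: real) (qJ: real) (qK: real)

lemma quat_eqI: "qRe x = qRe y \<Longrightarrow> qI x = qI y \<Longrightarrow> qJ x = qJ y \<Longrightarrow> qK x = qK y \<Longrightarrow> x = y"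
  by (cases x, cases y) simp

instantiation quat :: ring_1
begin
definition "0 = Quat 0 0 0 0"
definition "1 = Quat 1 0 0 0"
definition "x + y = Quat (qRe x + qRe y) (qI x + qI y) (qJ x + qJ y) (qK x + qK y)"
definition "x - y = Quat (qRe x - qRe y) (qI x - qI y) (qJ x - qJ y) (qK x - qK y)"
definition "- x = Quat (- qRe x) (- qI x) (- qJ x) (- qK x)"
definition "x * y = Quat
   (qRe x * qRe y - qI x * qI y - qJ x * qJ y - qK x * qK y)
   (qRe x * qI y + qI x * qRe y + qJ x * qK y - qK x * qJ y)
   (qRe x * qJ y - qI x * qK y + qJ x * qRe y + qK x * qI y)
   (qRe x * qK y + qI x * qJ y - qJ x * qI y + qK x * qRe y)"
instance
  by standard (auto intro!: quat_eqI simp: zero_quat_def one_quat_def plus_quat_def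
      minus_quat_def uminus_quat_def times_quat_def algebra_simps)
end

definition qcnj :: "quat \<Rightarrow> quat" where
  "qcnj x = Quat (qRe x) (- qI x) (- qJ x) (- qK x)"

definition qreal :: "real \<Rightarrow> quat" where
  "qreal t = Quat t 0 0 0"

text \<open>Matrices are functions \<open>nat \<Rightarrow> nat \<Rightarrow> quat\<close>; an m\<times>n matrix uses
  row indices 1..m and column indices 1..n.\<close>

type_synonym qmat = "nat \<Rightarrow> nat \<Rightarrow> quat"

definition conj_transpose :: "qmat \<Rightarrow> qmat" where
  "conj_transpose A = (\<lambda>p q. qcnj (A q p))"

definition qmat_mult :: "nat \<Rightarrow> qmat \<Rightarrow> qmat \<Rightarrow> qmat" where
  "qmat_mult m A B = (\<lambda>p q. \<Sum>r = 1..m. A p r * B r q)"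

definition qmat_id :: qmat where
  "qmat_id = (\<lambda>p q. if p = q then 1 else 0)"

definition qmat_add :: "qmat \<Rightarrow> qmat \<Rightarrow> qmat" where
  "qmat_add A B = (\<lambda>p q. A p q + B p q)"

definition qmat_scale :: "real \<Rightarrow> qmat \<Rightarrow> qmat" where
  "qmat_scale t A = (\<lambda>p q. qreal t * A p q)"

definition col :: "qmat \<Rightarrow> nat \<Rightarrow> (nat \<Rightarrow> quat)" where
  "col A j = (\<lambda>p. A p j)"

text \<open>\<open>col_repl M i b\<close> = \<open>M_{.i}(b)\<close>: column i replaced by b.\<close>
definition col_repl :: "qmat \<Rightarrow> nat \<Rightarrow> (nat \<Rightarrow> quat) \<Rightarrow> qmat" where
  "col_repl M i b = (\<lambda>p q. if q = i then b p else M p q)"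

definition cyc_orbit :: "(nat \<Rightarrow> nat) \<Rightarrow> nat \<Rightarrow> nat set" where
  "cyc_orbit \<tau> s = {(\<tau> ^^ k) s | k. True}"

definition cyc_len :: "(nat \<Rightarrow> nat) \<Rightarrow> nat \<Rightarrow> nat" where
  "cyc_len \<tau> s = (LEAST k. 0 < k \<and> (\<tau> ^^ k) s = s)"

definition cyc_prod :: "qmat \<Rightarrow> (nat \<Rightarrow> nat) \<Rightarrow> nat \<Rightarrow> quat" where
  "cyc_prod M \<tau> s =
     prod_list (map (\<lambda>k. M ((\<tau> ^^ k) s) ((\<tau> ^^ Suc k) s)) [0..<cyc_len \<tau> s])"

definition cyc_leaders :: "nat set \<Rightarrow> nat \<Rightarrow> (nat \<Rightarrow> nat) \<Rightarrow> nat set" where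
  "cyc_leaders S j \<tau> = {s \<in> S. j \<notin> cyc_orbit \<tau> s \<and> s = Min (cyc_orbit \<tau> s)}"

text \<open>Monomial of \<open>\<tau>\<close>: cycles with leaders \<open>j_{k_r} > \<dots> > j_{k_2}\<close> from left to
  right, then the cycle of j (starting at row j, ending at column j) on the right.\<close>
definition cdet_monomial :: "nat set \<Rightarrow> nat \<Rightarrow> qmat \<Rightarrow> (nat \<Rightarrow> nat) \<Rightarrow> quat" where
  "cdet_monomial S j M \<tau> =
     prod_list (map (cyc_prod M \<tau>) (rev (sorted_list_of_set (cyc_leaders S j \<tau>))))
     * cyc_prod M \<tau> j"

text \<open>\<open>cdet_on S j M\<close>: the column determinant \<open>cdet_j\<close> of the principal submatrix
  of M with rows and columns indexed by the finite set S (in increasing order),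
  j being (the column coming from) column j of M. r = number of cycles
  (fixed points included) = card of leaders + 1.\<close>
definition cdet_on :: "nat set \<Rightarrow> nat \<Rightarrow> qmat \<Rightarrow> quat" where
  "cdet_on S j M = (\<Sum>\<tau> \<in> {\<tau>. \<tau> permutes S}.
      (- 1) ^ (card S - (card (cyc_leaders S j \<tau>) + 1)) * cdet_monomial S j M \<tau>)"

definition cdet :: "nat \<Rightarrow> nat \<Rightarrow> qmat \<Rightarrow> quat" where
  "cdet n j M = cdet_on {1..n} j M"

text \<open>\<open>J_{k,n}{i}\<close>, strictly increasing k-sequences identified with k-subsets.\<close>
definition Jset :: "nat \<Rightarrow> nat \<Rightarrow> nat \<Rightarrow> nat set set" where
  "Jset k n i = {\<beta>. \<beta> \<subseteq> {1..n} \<and> card \<beta> = k \<and> i \<in> \<beta>}"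

end

theory Submission
  imports Defs
begin

lemma qreal_commute: "qreal r * y = y * qreal r"
  by (auto intro!: quat_eqI simp: qreal_def times_quat_def)

lemma qreal_power: "qreal r ^ n = qreal (r ^ n)"
  by (induction n) (auto intro!: quat_eqI simp: qreal_def times_quat_def one_quat_def)

lemma filter_notin_cong: "x \<notin> set xs \<Longrightarrow> filter (\<lambda>y. y \<notin> insert x F) xs = filter (\<lambda>y. y \<notin> F) xs"
  by (rule filter_cong) auto

lemma expand_prod:
  fixes c :: "'a::ring_1"
  assumes c: "\<And>y. c * y = y * c" and "distinct xs"
  shows "prod_list (map (\<lambda>x. if x \<in> P then c + f x else f x) xs)
       = (\<Sum>F\<in>Pow (P \<inter> set xs). c ^ card F * prod_list (map f (filter (\<lambda>x. x \<notin> F) xs)))"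
  using assms(2)
proof (induction xs)
  case Nil
  then show ?case by simp
next
  case (Cons x xs)
  define Q where "Q = P \<inter> set xs"
  define R where "R F = prod_list (map f (filter (\<lambda>x. x \<notin> F) xs))" for F
  have xn: "x \<notin> set xs" and dx: "distinct xs" using Cons.prems by auto
  have IH: "prod_list (map (\<lambda>x. if x \<in> P then c + f x else f x) xs) = (\<Sum>F\<in>Pow Q. c ^ card F * R F)"
    using Cons.IH dx by (simp add: Q_def R_def)
  have fQ: "finite Q" by (simp add: Q_def)
  have xQ: "x \<notin> Q" using xn by (simp add: Q_def)
  have comm: "f x * c ^ k = c ^ k * f x" for k
    by (metis c power_commuting_commutes)
  have s2: "f x * (\<Sum>F\<in>Pow Q. c ^ card F * R F) = (\<Sum>F\<in>Pow Q. c ^ card F * (f x * R F))"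
    by (simp add: sum_distrib_left mult.assoc[symmetric] comm)
  have keep: "F \<in> Pow Q \<Longrightarrow> filter (\<lambda>y. y \<notin> F) (x # xs) = x # filter (\<lambda>y. y \<notin> F) xs" for F
    using xQ by auto
  show ?case
  proof (cases "x \<in> P")
    case True
    have PQ: "P \<inter> set (x # xs) = insert x Q" using True by (auto simp: Q_def)
    have inj: "inj_on (insert x) (Pow Q)" using xQ by (auto simp: inj_on_def)
    have disj: "Pow Q \<inter> insert x ` Pow Q = {}" using xQ by auto
    have fin: "finite (Pow Q)" "finite (insert x ` Pow Q)" using fQ by auto
    have s1: "c * (\<Sum>F\<in>Pow Q. c ^ card F * R F) = (\<Sum>F\<in>insert x ` Pow Q. c ^ card F * prod_list (map f (filter (\<lambda>y. y \<notin> F) (x # xs))))"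
    proof -
      have "(\<Sum>F\<in>insert x ` Pow Q. c ^ card F * prod_list (map f (filter (\<lambda>y. y \<notin> F) (x # xs))))
          = (\<Sum>F\<in>Pow Q. c ^ card (insert x F) * prod_list (map f (filter (\<lambda>y. y \<notin> insert x F) (x # xs))))"
        by (rule sum.reindex[OF inj, unfolded comp_def])
      also have "\<dots> = (\<Sum>F\<in>Pow Q. c * (c ^ card F * R F))"
      proof (rule sum.cong[OF refl])
        fix F assume F: "F \<in> Pow Q"
        then have "finite F" "x \<notin> F" using fQ xQ finite_subset by auto
        then show "c ^ card (insert x F) * prod_list (map f (filter (\<lambda>y. y \<notin> insert x F) (x # xs))) = c * (c ^ card F * R F)"
          using filter_notin_cong[OF xn, of F] by (simp add: R_def mult.assoc)
      qed
      finally show ?thesis by (simp add: sum_distrib_left)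
    qed
    have "prod_list (map (\<lambda>x. if x \<in> P then c + f x else f x) (x # xs))
        = (c + f x) * (\<Sum>F\<in>Pow Q. c ^ card F * R F)" using True IH by simp
    also have "\<dots> = c * (\<Sum>F\<in>Pow Q. c ^ card F * R F) + f x * (\<Sum>F\<in>Pow Q. c ^ card F * R F)"
      by (simp add: distrib_right)
    also have "\<dots> = (\<Sum>F\<in>insert x ` Pow Q. c ^ card F * prod_list (map f (filter (\<lambda>y. y \<notin> F) (x # xs))))
          + (\<Sum>F\<in>Pow Q. c ^ card F * prod_list (map f (filter (\<lambda>y. y \<notin> F) (x # xs))))"
      using s1 s2 keep by (simp add: R_def)
    also have "\<dots> = (\<Sum>F\<in>Pow Q \<union> insert x ` Pow Q. c ^ card F * prod_list (map f (filter (\<lambda>y. y \<notin> F) (x # xs))))"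
      by (subst sum.union_disjoint[OF fin disj]) (simp add: add.commute)
    also have "Pow Q \<union> insert x ` Pow Q = Pow (P \<inter> set (x # xs))"
      unfolding PQ by (rule Pow_insert[symmetric])
    finally show ?thesis .
  next
    case False
    have PQ: "P \<inter> set (x # xs) = Q" using False by (auto simp: Q_def)
    have "prod_list (map (\<lambda>x. if x \<in> P then c + f x else f x) (x # xs))
        = f x * (\<Sum>F\<in>Pow Q. c ^ card F * R F)" using False IH by simp
    also have "\<dots> = (\<Sum>F\<in>Pow Q. c ^ card F * prod_list (map f (filter (\<lambda>y. y \<notin> F) (x # xs))))"
      using s2 keep by (simp add: R_def)
    finally show ?thesis unfolding PQ .

  qed
qed


lemma funpow_fixed: "\<tau> p = p \<Longrightarrow> (\<tau> ^^ k) p = p"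
  by (induction k) auto

lemma cyc_len_fixed: "\<tau> p = p \<Longrightarrow> cyc_len \<tau> p = 1"
  unfolding cyc_len_def by (rule Least_equality) auto

lemma cyc_prod_fixed: "\<tau> p = p \<Longrightarrow> cyc_prod M \<tau> p = M p p"
  by (simp add: cyc_prod_def cyc_len_fixed)

lemma cyc_orbit_fixed: "\<tau> p = p \<Longrightarrow> cyc_orbit \<tau> p = {p}"
  unfolding cyc_orbit_def using funpow_fixed[of \<tau> p] by (auto intro: exI[of _ 0])

lemma self_in_orbit: "s \<in> cyc_orbit \<tau> s"
  unfolding cyc_orbit_def by (auto intro: exI[of _ 0])

lemma cyc_prod_cong:
  assumes "\<And>k. M ((\<tau> ^^ k) s) (\<tau> ((\<tau> ^^ k) s)) = M' ((\<tau> ^^ k) s) (\<tau> ((\<tau> ^^ k) s))"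
  shows "cyc_prod M \<tau> s = cyc_prod M' \<tau> s"
  unfolding cyc_prod_def using assms by (intro arg_cong[where f=prod_list] map_cong) auto

lemma nonfix_orbit:
  assumes "inj \<tau>" "\<tau> s \<noteq> s" shows "\<tau> ((\<tau> ^^ k) s) \<noteq> (\<tau> ^^ k) s"
proof
  assume "\<tau> ((\<tau> ^^ k) s) = (\<tau> ^^ k) s"
  then have "(\<tau> ^^ k) (\<tau> s) = (\<tau> ^^ k) s" by (simp add: funpow_swap1)
  then have "\<tau> s = s" using inj_fn[OF assms(1), of k] by (auto dest: injD)
  with assms(2) show False by simp
qed

lemma sorted_list_of_set_diff:
  assumes "finite L"
  shows "sorted_list_of_set (L - F) = filter (\<lambda>x. x \<notin> F) (sorted_list_of_set L)"
  by (rule sorted_distinct_set_unique) (auto simp: assms sorted_wrt_filter)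


lemma cyc_prod_M':
  assumes MM': "\<And>p q. M' p q = (if p = q \<and> q \<noteq> i then qreal t + M p q else M p q)"
    and perm: "\<tau> permutes S"
  shows "cyc_prod M' \<tau> s = (if \<tau> s = s \<and> s \<noteq> i then qreal t + cyc_prod M \<tau> s else cyc_prod M \<tau> s)"
proof (cases "\<tau> s = s \<and> s \<noteq> i")
  case True
  then show ?thesis by (simp add: cyc_prod_fixed MM')
next
  case False
  have inj: "inj \<tau>" using perm by (simp add: permutes_inj)
  have "cyc_prod M' \<tau> s = cyc_prod M \<tau> s"
  proof (rule cyc_prod_cong)
    fix k
    let ?p = "(\<tau> ^^ k) s"
    show "M' ?p (\<tau> ?p) = M ?p (\<tau> ?p)"
    proof (cases "\<tau> s = s")
      case True
      then have "s = i" using False by simp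
      then show ?thesis using True funpow_fixed[of \<tau> s k] by (simp add: MM')
    next
      case nf: False
      then show ?thesis using nonfix_orbit[OF inj nf, of k] by (simp add: MM')
    qed
  qed
  then show ?thesis using False by (subst if_not_P[OF False]) simp
qed


definition fx :: "nat set \<Rightarrow> nat \<Rightarrow> (nat \<Rightarrow> nat) \<Rightarrow> nat set" where
  "fx S i \<tau> = {p \<in> S. \<tau> p = p \<and> p \<noteq> i}"

lemma fx_sub_leaders: "fx S i \<tau> \<subseteq> cyc_leaders S i \<tau>"
  by (auto simp: fx_def cyc_leaders_def cyc_orbit_fixed)

lemma leaders_sub: "cyc_leaders S i \<tau> \<subseteq> S"
  by (auto simp: cyc_leaders_def)

lemma leaders_diff: "cyc_leaders (S - F) i \<tau> = cyc_leaders S i \<tau> - F"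
  by (auto simp: cyc_leaders_def)

lemma K1:
  assumes MM': "\<And>p q. M' p q = (if p = q \<and> q \<noteq> i then qreal t + M p q else M p q)"
    and perm: "\<tau> permutes S" and fin: "finite S"
  shows "cdet_monomial S i M' \<tau> = (\<Sum>F\<in>Pow (fx S i \<tau>). qreal t ^ card F *
      prod_list (map (cyc_prod M \<tau>) (filter (\<lambda>x. x \<notin> F) (rev (sorted_list_of_set (cyc_leaders S i \<tau>)))))) * cyc_prod M \<tau> i"
proof -
  define L where "L = cyc_leaders S i \<tau>"
  define xs where "xs = rev (sorted_list_of_set L)"
  have finL: "finite L" unfolding L_def by (rule finite_subset[OF leaders_sub fin])
  have setxs: "set xs = L" and dxs: "distinct xs" using finL by (auto simp: xs_def)
  have m: "map (cyc_prod M' \<tau>) xs = map (\<lambda>x. if x \<in> fx S i \<tau> then qreal t + cyc_prod M \<tau> x else cyc_prod M \<tau> x) xs"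
  proof (rule map_cong[OF refl])
    fix x assume "x \<in> set xs"
    then have "x \<in> L" using setxs by simp
    then have xS: "x \<in> S" using leaders_sub[of S i \<tau>] by (auto simp: L_def)
    have iff: "(x \<in> fx S i \<tau>) = (\<tau> x = x \<and> x \<noteq> i)" using xS by (simp add: fx_def)
    show "cyc_prod M' \<tau> x = (if x \<in> fx S i \<tau> then qreal t + cyc_prod M \<tau> x else cyc_prod M \<tau> x)"
      unfolding iff by (rule cyc_prod_M'[OF MM' perm])
  qed
  have ci: "cyc_prod M' \<tau> i = cyc_prod M \<tau> i"
    using cyc_prod_M'[OF MM' perm, of i] by (metis (full_types))
  have fxL: "fx S i \<tau> \<inter> set xs = fx S i \<tau>" by (simp add: setxs L_def Int_absorb2 fx_sub_leaders)
  show ?thesis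
    unfolding cdet_monomial_def L_def[symmetric] xs_def[symmetric] m ci
    using expand_prod[of "qreal t" xs "fx S i \<tau>" "cyc_prod M \<tau>", OF qreal_commute dxs] fxL
    by (simp only:)
qed

lemma K3:
  assumes fin: "finite S"
  shows "cdet_monomial (S - F) i M \<tau> =
      prod_list (map (cyc_prod M \<tau>) (filter (\<lambda>x. x \<notin> F) (rev (sorted_list_of_set (cyc_leaders S i \<tau>))))) * cyc_prod M \<tau> i"
proof -
  have finL: "finite (cyc_leaders S i \<tau>)" by (rule finite_subset[OF leaders_sub fin])
  show ?thesis
    unfolding cdet_monomial_def leaders_diff sorted_list_of_set_diff[OF finL] rev_filter ..
qed

lemma K2:
  assumes fin: "finite S" and F: "F \<subseteq> fx S i \<tau>"
  shows "card (S - F) - (card (cyc_leaders (S - F) i \<tau>) + 1) = card S - (card (cyc_leaders S i \<tau>) + 1)"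
proof -
  have FL: "F \<subseteq> cyc_leaders S i \<tau>" using F fx_sub_leaders by blast
  have LS: "cyc_leaders S i \<tau> \<subseteq> S" by (rule leaders_sub)
  have finL: "finite (cyc_leaders S i \<tau>)" by (rule finite_subset[OF leaders_sub fin])
  have finF: "finite F" by (rule finite_subset[OF FL finL])
  have FS: "F \<subseteq> S" using FL LS by (rule subset_trans)
  have c1: "card (S - F) = card S - card F" by (rule card_Diff_subset[OF finF FS])
  have c2: "card (cyc_leaders (S - F) i \<tau>) = card (cyc_leaders S i \<tau>) - card F"
    unfolding leaders_diff by (rule card_Diff_subset[OF finF FL])
  have le1: "card F \<le> card (cyc_leaders S i \<tau>)" by (rule card_mono[OF finL FL])
  have le2: "card (cyc_leaders S i \<tau>) \<le> card S" by (rule card_mono[OF fin LS])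
  show ?thesis using c1 c2 le1 le2 by simp
qed


lemma permutes_diff_fixed:
  assumes "\<tau> permutes S" "\<And>x. x \<in> F \<Longrightarrow> \<tau> x = x"
  shows "\<tau> permutes (S - F)"
proof -
  have "\<forall>x. x \<notin> S - F \<longrightarrow> \<tau> x = x"
    using assms permutes_not_in[OF assms(1)] by blast
  moreover have "\<forall>y. \<exists>!x. \<tau> x = y" using assms(1) unfolding permutes_def by blast
  ultimately show ?thesis unfolding permutes_def by blast
qed

lemma core:
  assumes MM': "\<And>p q. M' p q = (if p = q \<and> q \<noteq> i then qreal t + M p q else M p q)"
    and fin: "finite S" and iS: "i \<in> S"
  shows "cdet_on S i M' = (\<Sum>\<beta>\<in>{\<beta>. \<beta> \<subseteq> S \<and> i \<in> \<beta>}. cdet_on \<beta> i M * qreal (t ^ (card S - card \<beta>)))"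
proof -
  define sg where "sg T \<tau> = (-1::quat) ^ (card T - (card (cyc_leaders T i \<tau>) + 1))" for T \<tau>
  define X where "X \<tau> F = prod_list (map (cyc_prod M \<tau>) (filter (\<lambda>x. x \<notin> F) (rev (sorted_list_of_set (cyc_leaders S i \<tau>)))))" for \<tau> F
  define g where "g \<tau> F = sg (S - F) \<tau> * cdet_monomial (S - F) i M \<tau> * qreal (t ^ (card S - card (S - F)))" for \<tau> F
  define h where "h \<beta> \<sigma> = sg \<beta> \<sigma> * cdet_monomial \<beta> i M \<sigma> * qreal (t ^ (card S - card \<beta>))" for \<beta> \<sigma>
  define Pm where "Pm = {\<tau>. \<tau> permutes S}"
  define B where "B = {\<beta>. \<beta> \<subseteq> S \<and> i \<in> \<beta>}"
  have finPm: "finite Pm" unfolding Pm_def by (rule finite_permutations[OF fin])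
  have finB: "finite B" unfolding B_def using fin by simp
  have fxS: "fx S i \<tau> \<subseteq> S" for \<tau> by (auto simp: fx_def)
  have step1: "sg S \<tau> * cdet_monomial S i M' \<tau> = (\<Sum>F\<in>Pow (fx S i \<tau>). g \<tau> F)" if tP: "\<tau> \<in> Pm" for \<tau>
  proof -
    have perm: "\<tau> permutes S" using tP by (simp add: Pm_def)
    have "sg S \<tau> * cdet_monomial S i M' \<tau>
        = (\<Sum>F\<in>Pow (fx S i \<tau>). sg S \<tau> * (qreal t ^ card F * X \<tau> F * cyc_prod M \<tau> i))"
      unfolding K1[OF MM' perm fin] X_def[symmetric]
      by (simp add: sum_distrib_left sum_distrib_right)
    also have "\<dots> = (\<Sum>F\<in>Pow (fx S i \<tau>). g \<tau> F)"
    proof (rule sum.cong[OF refl])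
      fix F assume "F \<in> Pow (fx S i \<tau>)"
      then have F: "F \<subseteq> fx S i \<tau>" by simp
      have FS: "F \<subseteq> S" using F fxS by blast
      have finF: "finite F" by (rule finite_subset[OF FS fin])
      have cF: "card S - card (S - F) = card F"
        using card_Diff_subset[OF finF FS] card_mono[OF fin FS] by simp
      have sgeq: "sg (S - F) \<tau> = sg S \<tau>" unfolding sg_def K2[OF fin F] ..
      have mo: "cdet_monomial (S - F) i M \<tau> = X \<tau> F * cyc_prod M \<tau> i"
        unfolding K3[OF fin] X_def ..
      show "sg S \<tau> * (qreal t ^ card F * X \<tau> F * cyc_prod M \<tau> i) = g \<tau> F"
        unfolding g_def sgeq mo cF qreal_power
        by (simp add: mult.assoc qreal_commute)
    qed
    finally show ?thesis .
  qed
  have "cdet_on S i M' = (\<Sum>\<tau>\<in>Pm. \<Sum>F\<in>Pow (fx S i \<tau>). g \<tau> F)"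
    unfolding cdet_on_def Pm_def[symmetric] sg_def[symmetric]
    by (rule sum.cong[OF refl]) (rule step1)
  also have "\<dots> = (\<Sum>(\<tau>, F)\<in>Sigma Pm (\<lambda>\<tau>. Pow (fx S i \<tau>)). g \<tau> F)"
    by (rule sum.Sigma[OF finPm]) (auto intro: finite_subset[OF fxS fin])
  also have "\<dots> = (\<Sum>(\<beta>, \<sigma>)\<in>Sigma B (\<lambda>\<beta>. {\<sigma>. \<sigma> permutes \<beta>}). h \<beta> \<sigma>)"
  proof (rule sum.reindex_bij_witness[where i="\<lambda>(\<beta>, \<sigma>). (\<sigma>, S - \<beta>)" and j="\<lambda>(\<tau>, F). (S - F, \<tau>)"])
    fix a assume "a \<in> Sigma Pm (\<lambda>\<tau>. Pow (fx S i \<tau>))"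
    then obtain \<tau> F where a: "a = (\<tau>, F)" and tP: "\<tau> permutes S" and F: "F \<subseteq> fx S i \<tau>"
      by (auto simp: Pm_def)
    have FS: "F \<subseteq> S" using F fxS by blast
    show "(\<lambda>(\<beta>, \<sigma>). (\<sigma>, S - \<beta>)) ((\<lambda>(\<tau>, F). (S - F, \<tau>)) a) = a"
      using a FS by auto
    have "\<tau> permutes (S - F)"
      by (rule permutes_diff_fixed[OF tP]) (use F in \<open>auto simp: fx_def\<close>)
    moreover have "i \<notin> F" using F by (auto simp: fx_def)
    ultimately show "(\<lambda>(\<tau>, F). (S - F, \<tau>)) a \<in> Sigma B (\<lambda>\<beta>. {\<sigma>. \<sigma> permutes \<beta>})"
      using a iS by (auto simp: B_def)
    show "(case (\<lambda>(\<tau>, F). (S - F, \<tau>)) a of (\<beta>, \<sigma>) \<Rightarrow> h \<beta> \<sigma>) = (case a of (\<tau>, F) \<Rightarrow> g \<tau> F)"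
      using a by (simp add: g_def h_def)
  next
    fix b assume "b \<in> Sigma B (\<lambda>\<beta>. {\<sigma>. \<sigma> permutes \<beta>})"
    then obtain \<beta> \<sigma> where b: "b = (\<beta>, \<sigma>)" and bS: "\<beta> \<subseteq> S" and iB: "i \<in> \<beta>" and sP: "\<sigma> permutes \<beta>"
      by (auto simp: B_def)
    show "(\<lambda>(\<tau>, F). (S - F, \<tau>)) ((\<lambda>(\<beta>, \<sigma>). (\<sigma>, S - \<beta>)) b) = b"
      using b bS by auto
    have "\<sigma> permutes S" by (rule permutes_subset[OF sP bS])
    moreover have "S - \<beta> \<subseteq> fx S i \<sigma>"
      using iB permutes_not_in[OF sP] by (auto simp: fx_def)
    ultimately show "(\<lambda>(\<beta>, \<sigma>). (\<sigma>, S - \<beta>)) b \<in> Sigma Pm (\<lambda>\<tau>. Pow (fx S i \<tau>))"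
      using b by (auto simp: Pm_def)
  qed
  also have "\<dots> = (\<Sum>\<beta>\<in>B. \<Sum>\<sigma>\<in>{\<sigma>. \<sigma> permutes \<beta>}. h \<beta> \<sigma>)"
    by (rule sum.Sigma[symmetric, OF finB]) (auto simp: B_def intro: finite_permutations finite_subset[OF _ fin])
  also have "\<dots> = (\<Sum>\<beta>\<in>B. cdet_on \<beta> i M * qreal (t ^ (card S - card \<beta>)))"
    unfolding cdet_on_def h_def sg_def by (simp add: sum_distrib_right)
  finally show ?thesis unfolding B_def .
qed


theorem lemma4p3:
  fixes A :: qmat and m n i j :: nat and t :: real
  assumes "i \<in> {1..n}" and "j \<in> {1..m}"
  shows "cdet n i (col_repl (qmat_add (qmat_scale t qmat_id)
                     (qmat_mult m (conj_transpose A) A)) i (col (conj_transpose A) j))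
       = (\<Sum>k = 1..n.
            (if k = n
             then cdet n i (col_repl (qmat_mult m (conj_transpose A) A) i (col (conj_transpose A) j))
             else (\<Sum>\<beta> \<in> Jset k n i.
                     cdet_on \<beta> i (col_repl (qmat_mult m (conj_transpose A) A) i
                                   (col (conj_transpose A) j))))
            * qreal (t ^ (n - k)))"
proof -
  define N where "N = qmat_mult m (conj_transpose A) A"
  define b where "b = col (conj_transpose A) j"
  define M where "M = col_repl N i b"
  define M' where "M' = col_repl (qmat_add (qmat_scale t qmat_id) N) i b"
  define B where "B = {\<beta>. \<beta> \<subseteq> {1..n} \<and> i \<in> \<beta>}"
  have MM': "M' p q = (if p = q \<and> q \<noteq> i then qreal t + M p q else M p q)" for p q
    by (simp add: M'_def M_def col_repl_def qmat_add_def qmat_scale_def qmat_id_def)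
  have lhs: "cdet n i M' = (\<Sum>\<beta>\<in>B. cdet_on \<beta> i M * qreal (t ^ (n - card \<beta>)))"
    unfolding cdet_def B_def using core[OF MM', of "{1..n}"] assms(1) by simp
  have J: "Jset k n i = {\<beta> \<in> B. card \<beta> = k}" for k
    by (auto simp: Jset_def B_def)
  have Jn: "Jset n n i = {{1..n}}"
  proof
    show "Jset n n i \<subseteq> {{1..n}}"
    proof
      fix \<beta> assume "\<beta> \<in> Jset n n i"
      then have "\<beta> \<subseteq> {1..n}" "card \<beta> = card {1..n}" by (auto simp: Jset_def)
      then show "\<beta> \<in> {{1..n}}" using card_subset_eq[of "{1..n}" \<beta>] by simp
    qed
    show "{{1..n}} \<subseteq> Jset n n i" using assms(1) by (simp add: Jset_def)
  qed
  have finB: "finite B" by (simp add: B_def)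
  have img: "card ` B \<subseteq> {1..n}"
  proof
    fix k assume "k \<in> card ` B"
    then obtain \<beta> where k: "k = card \<beta>" and bS: "\<beta> \<subseteq> {1..n}" and iB: "i \<in> \<beta>" by (auto simp: B_def)
    have "finite \<beta>" using bS finite_subset by blast
    then have "card \<beta> \<ge> 1" using iB by (metis One_nat_def Suc_leI card_gt_0_iff empty_iff)
    moreover have "card \<beta> \<le> n" using card_mono[OF _ bS] by simp
    ultimately show "k \<in> {1..n}" using k by simp
  qed
  have "(\<Sum>k = 1..n. (if k = n then cdet n i M else (\<Sum>\<beta> \<in> Jset k n i. cdet_on \<beta> i M)) * qreal (t ^ (n - k)))
      = (\<Sum>k = 1..n. \<Sum>\<beta> \<in> {\<beta> \<in> B. card \<beta> = k}. cdet_on \<beta> i M * qreal (t ^ (n - card \<beta>)))"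
  proof (rule sum.cong[OF refl])
    fix k assume "k \<in> {1..n}"
    have "(if k = n then cdet n i M else (\<Sum>\<beta> \<in> Jset k n i. cdet_on \<beta> i M)) = (\<Sum>\<beta> \<in> Jset k n i. cdet_on \<beta> i M)"
      using Jn by (simp add: cdet_def)
    then show "(if k = n then cdet n i M else (\<Sum>\<beta> \<in> Jset k n i. cdet_on \<beta> i M)) * qreal (t ^ (n - k))
        = (\<Sum>\<beta> \<in> {\<beta> \<in> B. card \<beta> = k}. cdet_on \<beta> i M * qreal (t ^ (n - card \<beta>)))"
      by (simp add: J sum_distrib_right)
  qed
  also have "\<dots> = (\<Sum>\<beta>\<in>B. cdet_on \<beta> i M * qreal (t ^ (n - card \<beta>)))"
    by (rule sum.group[OF finB _ img]) simp
  finally show ?thesis using lhs unfolding M_def M'_def N_def b_def by simp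
qed

end
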